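(* Fix a sequence of matchings and any non-negative load vector at the end of round $t_1$, and consider a token $i$ located at node $u=w_i^{(t_1)}$ at the end of round $t_1$. Then for any $t_2 \geq t_1$ and any node $v$, $\Pr[ w_i^{(t_2)} = v ] = \mathbf{M}_{u,v}^{[t_1+1,t_2]}$, and more generally, for any set $D \subseteq V$, $\Pr[ w_i^{(t_2)} \in D ] = \mathbf{M}_{u,D}^{[t_1+1,t_2]}$.
   Context: $G=(V,E)$ has $n$ nodes; a matching $\mathbf{M}^{(t)}\subseteq E$ is identified with the symmetric matrix with entries $1/2$ on $(u,u),(v,v),(u,v),(v,u)$ for $\{u,v\}\in\mathbf{M}^{(t)}$, $1$ on the diagonal for unmatched nodes, $0$ elsewhere; $\mathbf{M}^{[a,b]}=\prod_{s=a}^b\mathbf{M}^{(s)}$ (identity if $a>b$), and $\mathbf{M}_{u,D}=\sum_{v\in D}\mathbf{M}_{u,v}$. Token-based description of the discrete protocol: tokens are distinguishable; $x^{(t)}_u$ is the number of tokens at $u$ at the end of round $t$ and $w^{(t)}_i$ is the node holding token $i$. If $u,v$ are matched in round $t$, all $x^{(t-1)}_u+x^{(t-1)}_v$ tokens at $u$ and $v$ are put in an urn; with probability $1/2$ node $u$ draws $\lceil (x^{(t-1)}_u+x^{(t-1)}_v)/2\rceil$ tokens uniformly at random without replacement, otherwise it draws $\lfloor (x^{(t-1)}_u+x^{(t-1)}_v)/2\rfloor$ tokens (independently over matched edges and rounds); $v$ receives the remaining tokens. Unmatched nodes keep their tokens. *)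

theory Defs
  imports "HOL-Probability.Probability"
begin

text \<open>Nodes are the elements of a finite type 'n (so V = UNIV); tokens are the
elements of a finite type 'b.  A matching is represented as a set of ordered pairs
(u,v) (the orientation only names which endpoint is called u).\<close>

definition simple_graph :: "'n set set \<Rightarrow> bool" where
  "simple_graph E \<longleftrightarrow> (\<forall>e\<in>E. card e = 2)"

definition is_matching :: "'n set set \<Rightarrow> ('n \<times> 'n) set \<Rightarrow> bool" where
  "is_matching E M \<longleftrightarrow>
     (\<forall>(u,v)\<in>M. u \<noteq> v \<and> {u,v} \<in> E) \<and>
     (\<forall>p\<in>M. \<forall>q\<in>M. p \<noteq> q \<longrightarrow> {fst p, snd p} \<inter> {fst q, snd q} = {})"

definition matched :: "('n \<times> 'n) set \<Rightarrow> 'n \<Rightarrow> bool" where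
  "matched M u \<longleftrightarrow> (\<exists>p\<in>M. u = fst p \<or> u = snd p)"

definition matching_matrix :: "('n::finite \<times> 'n) set \<Rightarrow> real^'n^'n" where
  "matching_matrix M = (\<chi> u v.
     if (u,v) \<in> M \<or> (v,u) \<in> M then 1/2
     else if u = v then (if matched M u then 1/2 else 1) else 0)"

fun mseq :: "(nat \<Rightarrow> ('n::finite \<times> 'n) set) \<Rightarrow> nat \<Rightarrow> nat \<Rightarrow> real^'n^'n" where
  "mseq Ms a 0 = mat 1"
| "mseq Ms a (Suc n) = mseq Ms a n ** matching_matrix (Ms (a + n))"

text \<open>M^[a,b] = prod_{s=a}^b M^(s); identity if a > b.\<close>
definition Mint :: "(nat \<Rightarrow> ('n::finite \<times> 'n) set) \<Rightarrow> nat \<Rightarrow> nat \<Rightarrow> real^'n^'n" where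
  "Mint Ms a b = mseq Ms a (Suc b - a)"

definition Mset :: "real^'n^'n \<Rightarrow> 'n \<Rightarrow> 'n set \<Rightarrow> real" where
  "Mset A u D = (\<Sum>v\<in>D. A $ u $ v)"

text \<open>Random choice for one matched edge (u,v) given token positions w:
  the set of tokens that u receives.\<close>
definition edge_draw :: "('b::finite \<Rightarrow> 'n) \<Rightarrow> 'n \<times> 'n \<Rightarrow> 'b set pmf" where
  "edge_draw w e =
     (let T = {i. w i = fst e \<or> w i = snd e}; n = card T in
      do { up \<leftarrow> bernoulli_pmf (1/2);
           let k = (if up then (n + 1) div 2 else n div 2);
           pmf_of_set {S. S \<subseteq> T \<and> card S = k} })"

definition relocate :: "('n \<times> 'n) set \<Rightarrow> ('b \<Rightarrow> 'n) \<Rightarrow> ('n \<times> 'n \<Rightarrow> 'b set) \<Rightarrow> 'b \<Rightarrow> 'n" where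
  "relocate M w f i =
     (if matched M (w i) then
        (let e = (THE e. e \<in> M \<and> (w i = fst e \<or> w i = snd e)) in
           if i \<in> f e then fst e else snd e)
      else w i)"

definition round_step :: "('n \<times> 'n) set \<Rightarrow> ('b::finite \<Rightarrow> 'n) \<Rightarrow> ('b \<Rightarrow> 'n) pmf" where
  "round_step M w = map_pmf (relocate M w) (Pi_pmf M {} (edge_draw w))"

text \<open>run Ms t n w: distribution of the token positions at the end of round
  t+n, given positions w at the end of round t (rounds t+1..t+n performed).\<close>
fun run :: "(nat \<Rightarrow> ('n \<times> 'n) set) \<Rightarrow> nat \<Rightarrow> nat \<Rightarrow> ('b::finite \<Rightarrow> 'n) \<Rightarrow> ('b \<Rightarrow> 'n) pmf" where
  "run Ms t 0 w = return_pmf w"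
| "run Ms t (Suc n) w = run Ms t n w \<bind> round_step (Ms (t + n + 1))"

end

theory Submission
  imports Defs
begin


lemma card_subsets_with:
  assumes "finite T" "i \<in> T" "0 < k"
  shows "card {S. S \<subseteq> T \<and> card S = k \<and> i \<in> S} = (card T - 1) choose (k - 1)"
proof -
  have eq: "{S. S \<subseteq> T \<and> card S = k \<and> i \<in> S} = insert i ` {S. S \<subseteq> T - {i} \<and> card S = k - 1}"
  proof (intro set_eqI iffI)
    fix S assume S: "S \<in> {S. S \<subseteq> T \<and> card S = k \<and> i \<in> S}"
    hence "S = insert i (S - {i})" by auto
    moreover have "S - {i} \<in> {S. S \<subseteq> T - {i} \<and> card S = k - 1}"
      using S assms finite_subset[of S T] by auto
    ultimately show "S \<in> insert i ` {S. S \<subseteq> T - {i} \<and> card S = k - 1}" by blast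
  next
    fix S assume "S \<in> insert i ` {S. S \<subseteq> T - {i} \<and> card S = k - 1}"
    then obtain R where R: "R \<subseteq> T - {i}" "card R = k - 1" "S = insert i R" by auto
    have "finite R" using R(1) assms(1) finite_subset by blast
    hence "card S = k" using R assms(3) by (simp add: card_insert_if) (use R(1) in auto)
    thus "S \<in> {S. S \<subseteq> T \<and> card S = k \<and> i \<in> S}" using R assms by auto
  qed
  have inj: "inj_on (insert i) {S. S \<subseteq> T - {i} \<and> card S = k - 1}"
    by (rule inj_onI) (metis Diff_insert_absorb Diff_subset_conv insert_is_Un mem_Collect_eq subset_Diff_insert subset_iff insert_Diff_single)
  show ?thesis unfolding eq card_image[OF inj]
    using n_subsets[of "T - {i}" "k - 1"] assms by simp
qed

lemma subsets_prob:
  assumes "finite T" "i \<in> T" "k \<le> card T"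
  shows "measure (measure_pmf (pmf_of_set {S. S \<subseteq> T \<and> card S = k})) {S. i \<in> S} = real k / real (card T)"
proof -
  let ?A = "{S. S \<subseteq> T \<and> card S = k}"
  have cA: "card ?A = card T choose k" using n_subsets[OF assms(1)] by simp
  have pos: "card T choose k > 0" using assms(3) by simp
  have fin: "finite ?A" using assms(1) by simp
  have ne: "?A \<noteq> {}" using cA pos by (metis card.empty less_numeral_extra(3))
  have ct: "card T > 0" using assms card_gt_0_iff by blast
  show ?thesis
  proof (cases "k = 0")
    case True
    hence "?A \<inter> {S. i \<in> S} = {}" using assms(1) by (auto dest: finite_subset)
    thus ?thesis using measure_pmf_of_set[OF ne fin] True by simp
  next
    case False
    have "?A \<inter> {S. i \<in> S} = {S. S \<subseteq> T \<and> card S = k \<and> i \<in> S}" by auto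
    hence c: "card (?A \<inter> {S. i \<in> S}) = (card T - 1) choose (k - 1)"
      using card_subsets_with[OF assms(1,2)] False by simp
    have key: "k * (card T choose k) = card T * ((card T - 1) choose (k - 1))"
      using times_binomial_minus1_eq False by simp
    hence "real k * real (card T choose k) = real (card T) * real ((card T - 1) choose (k - 1))"
      by (metis of_nat_mult)
    have "measure (measure_pmf (pmf_of_set ?A)) {S. i \<in> S} = real ((card T - 1) choose (k - 1)) / real (card T choose k)"
      using measure_pmf_of_set[OF ne fin, of "{S. i \<in> S}"] c cA by simp
    also have "\<dots> = real k / real (card T)"
      using \<open>real k * _ = _\<close> pos ct by (simp add: field_simps)
    finally show ?thesis .
  qed
qed


lemma prob_bind_pmf:
  "measure (measure_pmf (bind_pmf M f)) X = (\<integral>x. measure (measure_pmf (f x)) X \<partial>measure_pmf M)"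
  unfolding measure_pmf_bind
  by (rule measure_pmf.measure_bind[where N="count_space UNIV"]) (auto simp: measure_pmf_in_subprob_algebra  space_subprob_algebra measure_pmf_in_subprob_space prob_space_imp_subprob_space measure_pmf.prob_space_axioms)

lemma edge_draw_half:
  fixes w :: "'b::finite \<Rightarrow> 'n"
  assumes "w i = fst e \<or> w i = snd e"
  shows "measure (measure_pmf (edge_draw w e)) {S. i \<in> S} = 1/2"
proof -
  define T where "T = {j. w j = fst e \<or> w j = snd e}"
  define n where "n = card T"
  have fT: "finite T" by simp
  have iT: "i \<in> T" using assms T_def by simp
  have cT: "card T > 0" using fT iT card_gt_0_iff by blast
  have n1: "n \<ge> 1" using cT unfolding n_def by linarith
  have k1: "(n + 1) div 2 \<le> card T" unfolding n_def[symmetric] using n1 by presburger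
  have k2: "n div 2 \<le> card T" unfolding n_def[symmetric] by presburger
  have nn: "(n+1) div 2 + n div 2 = n" by presburger
  have "measure (measure_pmf (edge_draw w e)) {S. i \<in> S}
      = (\<integral>up. measure (measure_pmf (pmf_of_set {S. S \<subseteq> T \<and> card S = (if up then (n + 1) div 2 else n div 2)})) {S. i \<in> S} \<partial>measure_pmf (bernoulli_pmf (1/2)))"
    unfolding edge_draw_def Let_def T_def[symmetric] n_def[symmetric] by (rule prob_bind_pmf)
  also have "\<dots> = measure (measure_pmf (pmf_of_set {S. S \<subseteq> T \<and> card S = (if True then (n + 1) div 2 else n div 2)})) {S. i \<in> S} * (1/2)
      + measure (measure_pmf (pmf_of_set {S. S \<subseteq> T \<and> card S = (if False then (n + 1) div 2 else n div 2)})) {S. i \<in> S} * (1 - 1/2)"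
    by (rule integral_bernoulli_pmf) auto
  also have "\<dots> = real ((n+1) div 2) / real n * (1/2) + real (n div 2) / real n * (1/2)"
    unfolding if_True if_False subsets_prob[OF fT iT k1] subsets_prob[OF fT iT k2] by (simp add: n_def)
  also have "\<dots> = real ((n+1) div 2 + n div 2) / real n / 2" by (simp add: add_divide_distrib)
  also have "\<dots> = 1/2" unfolding nn using n1 by simp
  finally show ?thesis .
qed

lemma matching_uniq:
  assumes "is_matching E M" "e \<in> M" "e' \<in> M" "x = fst e \<or> x = snd e" "x = fst e' \<or> x = snd e'"
  shows "e = e'"
  using assms unfolding is_matching_def by blast

lemma matching_ne:
  assumes "is_matching E M" "e \<in> M" shows "fst e \<noteq> snd e"
  using assms unfolding is_matching_def by auto

lemma round_prob:
  fixes w :: "'b::finite \<Rightarrow> 'n::finite"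
  assumes M: "is_matching E M"
  shows "measure (measure_pmf (round_step M w)) {w'. w' i = v} = matching_matrix M $ w i $ v"
proof (cases "matched M (w i)")
  case False
  have r: "\<And>f. relocate M w f i = w i" using False by (simp add: relocate_def)
  have nm: "(w i, v) \<notin> M \<and> (v, w i) \<notin> M" using False unfolding matched_def by force
  show ?thesis
    unfolding round_step_def measure_map_pmf using r nm False
    by (cases "w i = v") (auto simp: vimage_def matching_matrix_def)
next
  case True
  then obtain e where e: "e \<in> M" "w i = fst e \<or> w i = snd e" unfolding matched_def by blast
  have the: "(THE e. e \<in> M \<and> (w i = fst e \<or> w i = snd e)) = e"
    using e matching_uniq[OF M] by (intro the_equality) blast+
  have r: "\<And>f. relocate M w f i = (if i \<in> f e then fst e else snd e)"
    using True the by (simp add: relocate_def Let_def)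
  have finM: "finite M" by simp
  have "measure (measure_pmf (round_step M w)) {w'. w' i = v}
      = measure (measure_pmf (map_pmf (\<lambda>f. f e) (Pi_pmf M {} (edge_draw w)))) {S. (if i \<in> S then fst e else snd e) = v}"
    unfolding round_step_def measure_map_pmf by (simp add: vimage_def r)
  also have "\<dots> = measure (measure_pmf (edge_draw w e)) {S. (if i \<in> S then fst e else snd e) = v}"
    using Pi_pmf_component[OF finM, of e "{}" "edge_draw w"] e(1) by simp
  finally have P: "measure (measure_pmf (round_step M w)) {w'. w' i = v} =
      measure (measure_pmf (edge_draw w e)) {S. (if i \<in> S then fst e else snd e) = v}" .
  have half: "measure (measure_pmf (edge_draw w e)) {S. i \<in> S} = 1/2"
    using edge_draw_half e(2) by blast
  have ne: "fst e \<noteq> snd e" using matching_ne[OF M e(1)] .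
  have pair: "\<And>y. ((w i, y) \<in> M \<or> (y, w i) \<in> M) \<longleftrightarrow> (y = fst e \<or> y = snd e) \<and> y \<noteq> w i"
  proof -
    fix y
    show "((w i, y) \<in> M \<or> (y, w i) \<in> M) \<longleftrightarrow> (y = fst e \<or> y = snd e) \<and> y \<noteq> w i"
    proof
      assume "(w i, y) \<in> M \<or> (y, w i) \<in> M"
      then show "(y = fst e \<or> y = snd e) \<and> y \<noteq> w i"
      proof
        assume h: "(w i, y) \<in> M"
        hence "(w i, y) = e" using matching_uniq[OF M h e(1) _ e(2)] by simp
        thus ?thesis using ne by auto
      next
        assume h: "(y, w i) \<in> M"
        hence "(y, w i) = e" using matching_uniq[OF M h e(1) _ e(2)] by simp
        thus ?thesis using ne by auto
      qed
    next
      assume "(y = fst e \<or> y = snd e) \<and> y \<noteq> w i"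
      thus "(w i, y) \<in> M \<or> (y, w i) \<in> M" using e ne by (cases e) auto
    qed
  qed
  have mat: "matching_matrix M $ w i $ v = (if v = fst e \<or> v = snd e then 1/2 else 0)"
  proof -
    have d: "matching_matrix M $ w i $ v = (if (w i, v) \<in> M \<or> (v, w i) \<in> M then 1/2
       else if w i = v then (if matched M (w i) then 1/2 else 1) else 0)"
      by (simp add: matching_matrix_def)
    show ?thesis unfolding d using pair[of v] True e(2) by (simp only: if_True if_False) (smt (verit))
  qed
  show ?thesis
  proof (cases "v = fst e")
    case True
    hence "{S. (if i \<in> S then fst e else snd e) = v} = {S. i \<in> S}" using ne by auto
    thus ?thesis using P half mat True by simp
  next
    case F: False
    show ?thesis
    proof (cases "v = snd e")
      case True
      hence "{S. (if i \<in> S then fst e else snd e) = v} = UNIV - {S. i \<in> S}" using ne by auto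
      moreover have "measure (measure_pmf (edge_draw w e)) (UNIV - {S. i \<in> S}) = 1/2"
        using measure_pmf.prob_compl[of "{S. i \<in> S}" "edge_draw w e"] half by simp
      ultimately show ?thesis using P mat True by simp
    next
      case False
      hence "{S. (if i \<in> S then fst e else snd e) = v} = {}" using F by auto
      thus ?thesis using P mat False F by simp
    qed
  qed
qed

lemma run_prob:
  fixes w0 :: "'b::finite \<Rightarrow> 'n::finite"
  assumes M: "\<And>t. t \<ge> 1 \<Longrightarrow> is_matching E (Ms t)"
  shows "measure (measure_pmf (run Ms t n w0)) {w. w i = v} = mseq Ms (t + 1) n $ w0 i $ v"
proof (induction n arbitrary: v)
  case 0
  show ?case by (simp add: mat_def)
next
  case (Suc n)
  let ?A = "matching_matrix (Ms (t + n + 1))"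
  have Mm: "is_matching E (Ms (Suc (t + n)))" using M by simp
  have "measure (measure_pmf (run Ms t (Suc n) w0)) {w. w i = v}
      = (\<integral>w. ?A $ w i $ v \<partial>measure_pmf (run Ms t n w0))"
    by (simp add: prob_bind_pmf round_prob[OF Mm])
  also have "\<dots> = (\<integral>x. ?A $ x $ v \<partial>measure_pmf (map_pmf (\<lambda>w. w i) (run Ms t n w0)))"
    by simp
  also have "\<dots> = (\<Sum>x\<in>UNIV. pmf (map_pmf (\<lambda>w. w i) (run Ms t n w0)) x *\<^sub>R ?A $ x $ v)"
    by (rule integral_measure_pmf[of UNIV]) auto
  also have "\<dots> = (\<Sum>x\<in>UNIV. mseq Ms (t + 1) n $ w0 i $ x * ?A $ x $ v)"
    by (intro sum.cong refl) (simp add: pmf_map vimage_def Suc.IH)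
  also have "\<dots> = mseq Ms (t + 1) (Suc n) $ w0 i $ v"
    by (simp add: matrix_matrix_mult_def add.commute add.left_commute)
  finally show ?case .
qed

theorem lemma3p1:
  fixes E :: "'n::finite set set"
    and Ms :: "nat \<Rightarrow> ('n \<times> 'n) set"
    and w0 :: "'b::finite \<Rightarrow> 'n"
    and i :: 'b
    and t1 t2 :: nat
  assumes "simple_graph E"
    and "\<And>t. t \<ge> 1 \<Longrightarrow> is_matching E (Ms t)"
    and "t1 \<le> t2"
  shows "(\<forall>v. measure_pmf.prob (run Ms t1 (t2 - t1) w0) {w. w i = v}
                = Mint Ms (t1 + 1) t2 $ w0 i $ v)
       \<and> (\<forall>D. measure_pmf.prob (run Ms t1 (t2 - t1) w0) {w. w i \<in> D}
                = Mset (Mint Ms (t1 + 1) t2) (w0 i) D)"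
proof -
  have MI: "Mint Ms (t1 + 1) t2 = mseq Ms (t1 + 1) (t2 - t1)"
    unfolding Mint_def by simp
  have A: "\<forall>v. measure_pmf.prob (run Ms t1 (t2 - t1) w0) {w. w i = v}
                = Mint Ms (t1 + 1) t2 $ w0 i $ v"
    unfolding MI proof
    fix v show "measure_pmf.prob (run Ms t1 (t2 - t1) w0) {w. w i = v} = mseq Ms (t1 + 1) (t2 - t1) $ w0 i $ v"
      by (rule run_prob[of E Ms]) (rule assms(2))
  qed
  have B: "measure_pmf.prob (run Ms t1 (t2 - t1) w0) {w. w i \<in> D}
                = Mset (Mint Ms (t1 + 1) t2) (w0 i) D" for D
  proof -
    have "measure_pmf.prob (run Ms t1 (t2 - t1) w0) {w. w i \<in> D}
        = measure (measure_pmf (map_pmf (\<lambda>w. w i) (run Ms t1 (t2 - t1) w0))) D"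
      by (simp add: vimage_def)
    also have "\<dots> = (\<Sum>v\<in>D. pmf (map_pmf (\<lambda>w. w i) (run Ms t1 (t2 - t1) w0)) v)"
      by (rule measure_measure_pmf_finite) simp
    also have "\<dots> = (\<Sum>v\<in>D. Mint Ms (t1 + 1) t2 $ w0 i $ v)"
      by (intro sum.cong refl) (use A in \<open>simp add: pmf_map vimage_def\<close>)
    finally show ?thesis by (simp add: Mset_def)
  qed
  show ?thesis using A B by blast
qed

end
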